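(* For $k\ge 0$ let $B_k$ denote the family of bar $k$-visibility graphs. Then for all $i,j\ge 0$ with $i\ne j$, $B_i\not\subseteq B_j$ and $B_j\not\subseteq B_i$.
   Context: A bar $k$-visibility representation is a finite collection of pairwise disjoint closed horizontal line segments (bars) in the plane; two bars are joined by a line of sight if there is a vertical segment with endpoints on the two bars intersecting at most $k$ other bars. The bar $k$-visibility graph has one vertex per bar, two vertices adjacent iff their bars are joined by a line of sight. *)

theory Defs
  imports Main "HOL.Real"
begin

text \<open>A bar is a closed horizontal segment {(x, y) | l <= x <= r} with l < r,
  encoded as the triple (y, l, r).\<close>
type_synonym bar = "real \<times> real \<times> real"

definition bar_y :: "bar \<Rightarrow> real" where "bar_y b = fst b"
definition bar_l :: "bar \<Rightarrow> real" where "bar_l b = fst (snd b)"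
definition bar_r :: "bar \<Rightarrow> real" where "bar_r b = snd (snd b)"

definition bar_rep :: "'a set \<Rightarrow> ('a \<Rightarrow> bar) \<Rightarrow> bool" where
  "bar_rep V B \<longleftrightarrow> finite V \<and>
     (\<forall>v\<in>V. bar_l (B v) < bar_r (B v)) \<and>
     (\<forall>u\<in>V. \<forall>v\<in>V. u \<noteq> v \<longrightarrow>
        bar_y (B u) \<noteq> bar_y (B v) \<or> bar_r (B u) < bar_l (B v) \<or> bar_r (B v) < bar_l (B u))"

definition bars_crossed :: "'a set \<Rightarrow> ('a \<Rightarrow> bar) \<Rightarrow> 'a \<Rightarrow> 'a \<Rightarrow> real \<Rightarrow> nat" where
  "bars_crossed V B u v x = card {w \<in> V - {u, v}.
      bar_l (B w) \<le> x \<and> x \<le> bar_r (B w) \<and>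
      min (bar_y (B u)) (bar_y (B v)) \<le> bar_y (B w) \<and>
      bar_y (B w) \<le> max (bar_y (B u)) (bar_y (B v))}"

definition k_sees :: "nat \<Rightarrow> 'a set \<Rightarrow> ('a \<Rightarrow> bar) \<Rightarrow> 'a \<Rightarrow> 'a \<Rightarrow> bool" where
  "k_sees k V B u v \<longleftrightarrow> (\<exists>x.
      bar_l (B u) \<le> x \<and> x \<le> bar_r (B u) \<and>
      bar_l (B v) \<le> x \<and> x \<le> bar_r (B v) \<and>
      bars_crossed V B u v x \<le> k)"

text \<open>The (simple) graph (V, E) is a bar k-visibility graph (up to isomorphism: vertices are
  abstract labels of the bars).\<close>
definition bar_k_visibility_graph :: "nat \<Rightarrow> 'a set \<Rightarrow> ('a \<Rightarrow> 'a \<Rightarrow> bool) \<Rightarrow> bool" where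
  "bar_k_visibility_graph k V E \<longleftrightarrow>
     (\<exists>B. bar_rep V B \<and>
        (\<forall>u v. E u v \<longleftrightarrow> (u \<in> V \<and> v \<in> V \<and> u \<noteq> v \<and> k_sees k V B u v)))"

end

theory Submission
  imports Defs
begin


abbreviation cov :: "('a \<Rightarrow> bar) \<Rightarrow> 'a \<Rightarrow> real \<Rightarrow> bool" where
  "cov B v x \<equiv> bar_l (B v) \<le> x \<and> x \<le> bar_r (B v)"

lemma rep_finite: "bar_rep V B \<Longrightarrow> finite V"
  by (simp add: bar_rep_def)

lemma rep_lr: "bar_rep V B \<Longrightarrow> v \<in> V \<Longrightarrow> bar_l (B v) < bar_r (B v)"
  by (simp add: bar_rep_def)

lemma rep_hd: "bar_rep V B \<Longrightarrow> u\<in>V \<Longrightarrow> v\<in>V \<Longrightarrow> u\<noteq>v \<Longrightarrow> cov B u x \<Longrightarrow> cov B v x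
   \<Longrightarrow> bar_y (B u) \<noteq> bar_y (B v)"
  unfolding bar_rep_def by force

lemma k_sees_sym: "k_sees k V B u v = k_sees k V B v u"
proof -
  have "bars_crossed V B u v x = bars_crossed V B v u x" for x
    unfolding bars_crossed_def by (simp add: insert_commute min.commute max.commute)
  thus ?thesis unfolding k_sees_def by metis
qed

lemma sort_props:
  fixes S :: "nat set" and Y :: "nat \<Rightarrow> real"
  assumes "finite S" "inj_on Y S"
  defines "vs \<equiv> sort_key Y (sorted_list_of_set S)"
  shows "distinct vs" "set vs = S" "length vs = card S"
        "\<And>a b. a < b \<Longrightarrow> b < length vs \<Longrightarrow> Y (vs!a) < Y (vs!b)"
proof -
  show d: "distinct vs" using assms by (simp add: vs_def)
  show s: "set vs = S" using assms by (simp add: vs_def)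
  show "length vs = card S" using assms by (simp add: vs_def)
  fix a b assume ab: "a < b" "b < length vs"
  have "sorted (map Y vs)" by (simp add: vs_def)
  hence "(map Y vs)!a \<le> (map Y vs)!b" using ab by (intro sorted_nth_mono) auto
  hence le: "Y (vs!a) \<le> Y (vs!b)" using ab by simp
  have "vs!a \<noteq> vs!b" using d ab by (simp add: nth_eq_iff_index_eq)
  moreover have "vs!a \<in> S" "vs!b \<in> S" using ab s nth_mem[of a vs] nth_mem[of b vs] by auto
  ultimately have "Y (vs!a) \<noteq> Y (vs!b)" using assms(2) by (auto simp: inj_on_def)
  with le show "Y (vs!a) < Y (vs!b)" by simp
qed


lemma block_clique:
  fixes V :: "nat set"
  assumes rep: "bar_rep V B" and a: "a \<in> V" and c: "c \<in> V" and ac: "a \<noteq> c"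
    and ns: "\<not> k_sees k V B a c"
    and cova: "cov B a x" and covc: "cov B c x"
  shows "\<exists>T \<subseteq> V - {a,c}. card T = k+1 \<and> (\<forall>s\<in>T. \<forall>t\<in>T. s \<noteq> t \<longrightarrow> k_sees k V B s t)"
proof -
  let ?Y = "\<lambda>w. bar_y (B w)"
  define S where "S = {w \<in> V - {a,c}. cov B w x \<and> min (?Y a) (?Y c) \<le> ?Y w \<and> ?Y w \<le> max (?Y a) (?Y c)}"
  have fin: "finite S" using rep_finite[OF rep] by (simp add: S_def)
  have cS: "k < card S" using ns cova covc unfolding k_sees_def bars_crossed_def S_def by force
  have injS: "inj_on ?Y S"
    unfolding inj_on_def S_def using rep_hd[OF rep] by blast
  define vs where "vs = sort_key ?Y (sorted_list_of_set S)"
  note P = sort_props[OF fin injS, folded vs_def]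
  define T where "T = set (take (k+1) vs)"
  have lenvs: "k+1 \<le> length vs" using P(3) cS by simp
  have cT: "card T = k+1" unfolding T_def using P(1) lenvs
    by (simp add: distinct_card min_def)
  have TS: "T \<subseteq> S" unfolding T_def using P(2) set_take_subset by metis
  have SV: "S \<subseteq> V - {a,c}" by (auto simp: S_def)
  have strictS: "\<And>w. w \<in> S \<Longrightarrow> min (?Y a) (?Y c) < ?Y w \<and> ?Y w < max (?Y a) (?Y c)"
  proof -
    fix w assume w: "w \<in> S"
    hence "?Y w \<noteq> ?Y a" "?Y w \<noteq> ?Y c" using rep_hd[OF rep _ a _ _ cova] rep_hd[OF rep _ c _ _ covc]
      by (auto simp: S_def)
    thus "min (?Y a) (?Y c) < ?Y w \<and> ?Y w < max (?Y a) (?Y c)" using w by (auto simp: S_def)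
  qed
  have "\<forall>s\<in>T. \<forall>t\<in>T. s \<noteq> t \<longrightarrow> k_sees k V B s t"
  proof (intro ballI impI)
    fix s t assume s: "s \<in> T" and t: "t \<in> T" and st: "s \<noteq> t"
    obtain p where p: "p < k+1" "s = vs!p" using s lenvs unfolding T_def
      by (auto simp: in_set_conv_nth)
    obtain q where q: "q < k+1" "t = vs!q" using t lenvs unfolding T_def
      by (auto simp: in_set_conv_nth)
    have sS: "s \<in> S" and tS: "t \<in> S" using s t TS by auto
    define C where "C = {w \<in> V - {s,t}. cov B w x \<and> min (?Y s) (?Y t) \<le> ?Y w \<and> ?Y w \<le> max (?Y s) (?Y t)}"
    have CT: "C \<subseteq> T - {s}"
    proof
      fix w assume w: "w \<in> C"
      have wS: "w \<in> S" using w strictS[OF sS] strictS[OF tS] unfolding C_def S_def by auto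
      then obtain r where r: "r < length vs" "w = vs!r" using P(2) by (metis in_set_conv_nth)
      have "r \<le> max p q"
      proof (rule ccontr)
        assume "\<not> r \<le> max p q"
        hence "?Y s < ?Y w" "?Y t < ?Y w" using P(4)[of p r] P(4)[of q r] r p q by auto
        thus False using w by (auto simp: C_def)
      qed
      hence "r < k+1" using p q by simp
      hence "w \<in> T" unfolding T_def using r lenvs by (auto simp: in_set_conv_nth intro!: exI[of _ r])
      thus "w \<in> T - {s}" using w by (auto simp: C_def)
    qed
    have "card C \<le> card (T - {s})" using CT by (intro card_mono) (auto simp: T_def)
    also have "\<dots> = k" using cT s by simp
    finally have "card C \<le> k" .
    moreover have "cov B s x" "cov B t x" using sS tS by (auto simp: S_def)
    moreover have "bars_crossed V B s t x = card C" by (simp add: bars_crossed_def C_def)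
    ultimately show "k_sees k V B s t" unfolding k_sees_def by (intro exI[of _ x]) simp
  qed
  thus ?thesis using cT TS SV by (intro exI[of _ T]) auto
qed


lemma K_not:
  fixes V :: "nat set"
  assumes rep: "bar_rep V B"
    and all: "\<And>u v. u\<in>V \<Longrightarrow> v\<in>V \<Longrightarrow> u\<noteq>v \<Longrightarrow> k_sees k V B u v"
    and cardV: "2*(2*k+3) \<le> card V"
  shows False
proof -
  let ?Y = "\<lambda>w. bar_y (B w)"
  let ?L = "\<lambda>w. bar_l (B w)"
  let ?R = "\<lambda>w. bar_r (B w)"
  have fin: "finite V" using rep_finite[OF rep] .
  have ne: "V \<noteq> {}" using cardV by auto
  define x0 where "x0 = Max (?L ` V)"
  have x0ge: "\<And>v. v \<in> V \<Longrightarrow> ?L v \<le> x0" unfolding x0_def using fin by simp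
  have "x0 \<in> ?L ` V" unfolding x0_def using Max_in[of "?L ` V"] fin ne by blast
  then obtain w0 where w0: "w0 \<in> V" "x0 = ?L w0" by blast
  have x0le: "\<And>v. v \<in> V \<Longrightarrow> x0 \<le> ?R v"
  proof -
    fix v assume v: "v \<in> V"
    show "x0 \<le> ?R v"
    proof (cases "v = w0")
      case True thus ?thesis using rep_lr[OF rep v] w0 by simp
    next
      case False
      then obtain x where "?L w0 \<le> x" "x \<le> ?R v" using all[OF w0(1) v] unfolding k_sees_def by auto
      thus ?thesis using w0 by simp
    qed
  qed
  have inj: "inj_on ?Y V" unfolding inj_on_def using rep_hd[OF rep] x0ge x0le by blast
  define vs where "vs = sort_key ?Y (sorted_list_of_set V)"
  note P = sort_props[OF fin inj, folded vs_def]
  define m where "m = 2*k+3"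
  have len: "2*m \<le> length vs" using P(3) cardV m_def by simp
  have inV: "\<And>r. r < length vs \<Longrightarrow> vs!r \<in> V" using P(2) nth_mem by blast
  have "\<forall>t. \<exists>x. t < m \<longrightarrow> cov B (vs!t) x \<and> cov B (vs!(t+m)) x \<and> bars_crossed V B (vs!t) (vs!(t+m)) x \<le> k"
  proof
    fix t
    show "\<exists>x. t < m \<longrightarrow> cov B (vs!t) x \<and> cov B (vs!(t+m)) x \<and> bars_crossed V B (vs!t) (vs!(t+m)) x \<le> k"
    proof (cases "t < m")
      case True
      have "vs!t \<noteq> vs!(t+m)" using P(1) len True by (simp add: nth_eq_iff_index_eq)
      hence "k_sees k V B (vs!t) (vs!(t+m))" using all inV len True by simp
      thus ?thesis unfolding k_sees_def by auto
    qed simp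
  qed
  then obtain X where X: "\<And>t. t < m \<Longrightarrow> cov B (vs!t) (X t) \<and> cov B (vs!(t+m)) (X t) \<and> bars_crossed V B (vs!t) (vs!(t+m)) (X t) \<le> k"
    by (metis choice)
  have count: "card A - 1 \<le> bars_crossed V B (vs!t) (vs!(t+m)) (X t)"
    if A: "A \<subseteq> {..<m}" "t \<in> A" and cv: "\<forall>s\<in>A. cov B (vs!s) (X t) \<and> cov B (vs!(s+m)) (X t)" for A t
  proof -
    define f where "f s = (if t < s then vs!s else vs!(s+m))" for s
    define C where "C = {w \<in> V - {vs!t, vs!(t+m)}. cov B w (X t) \<and> min (?Y (vs!t)) (?Y (vs!(t+m))) \<le> ?Y w \<and> ?Y w \<le> max (?Y (vs!t)) (?Y (vs!(t+m)))}"
    have tm: "t < m" using A by auto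
    have mono: "?Y (vs!t) < ?Y (vs!(t+m))" using P(4)[of t "t+m"] len tm by simp
    have inj: "inj_on f (A - {t})"
    proof (rule inj_onI)
      fix s1 s2 assume s1: "s1 \<in> A - {t}" and s2: "s2 \<in> A - {t}" and e: "f s1 = f s2"
      have "s1 < m" "s2 < m" using s1 s2 A by auto
      thus "s1 = s2" using e len P(1) unfolding f_def
        by (auto simp: nth_eq_iff_index_eq split: if_splits)
    qed
    have img: "f ` (A - {t}) \<subseteq> C"
    proof
      fix w assume "w \<in> f ` (A - {t})"
      then obtain s where s: "s \<in> A" "s \<noteq> t" "w = f s" by auto
      have sm: "s < m" using s A by auto
      define r where "r = (if t < s then s else s+m)"
      have wr: "w = vs!r" using s by (simp add: f_def r_def)
      have r1: "t < r" "r < t+m" using sm tm s(2) by (auto simp: r_def)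
      have rl: "r < length vs" using r1 len tm by simp
      have "?Y (vs!t) < ?Y w" "?Y w < ?Y (vs!(t+m))" using P(4)[of t r] P(4)[of r "t+m"] r1 rl len tm wr by auto
      moreover have "w \<noteq> vs!t" "w \<noteq> vs!(t+m)" using calculation by auto
      moreover have "cov B w (X t)" using cv s wr by (auto simp: r_def split: if_splits)
      moreover have "w \<in> V" using inV rl wr by simp
      ultimately show "w \<in> C" unfolding C_def using mono by auto
    qed
    have "card (A - {t}) \<le> card C" using card_inj_on_le[OF inj img] fin by (simp add: C_def)
    moreover have "bars_crossed V B (vs!t) (vs!(t+m)) (X t) = card C" by (simp add: bars_crossed_def C_def)
    moreover have "card (A - {t}) = card A - 1" using A by simp
    ultimately show ?thesis by simp
  qed
  define Rt where "Rt = {t. t < m \<and> x0 \<le> X t}"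
  define Lt where "Lt = {t. t < m \<and> X t < x0}"
  have "card Rt + card Lt = m"
  proof -
    have "Rt \<union> Lt = {..<m}" "Rt \<inter> Lt = {}" by (auto simp: Rt_def Lt_def)
    moreover have "finite Rt" "finite Lt" by (auto simp: Rt_def Lt_def)
    ultimately show ?thesis using card_Un_disjoint[of Rt Lt] by simp
  qed
  hence "k+2 \<le> card Rt \<or> k+2 \<le> card Lt" using m_def by linarith
  thus False
  proof
    assume cR: "k+2 \<le> card Rt"
    have finR1: "finite Rt" by (simp add: Rt_def)
    have finR: "finite Rt" "Rt \<noteq> {}" using cR finR1 by (auto simp del: One_nat_def)
    have "Min (X ` Rt) \<in> X ` Rt" using Min_in[of "X ` Rt"] finR by blast
    then obtain t where t: "t \<in> Rt" "X t = Min (X ` Rt)" by (metis imageE)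
    have tmin: "\<And>s. s \<in> Rt \<Longrightarrow> X t \<le> X s" using t finR by simp
    have tm: "t < m" using t by (simp add: Rt_def)
    have cv: "\<forall>s\<in>Rt. cov B (vs!s) (X t) \<and> cov B (vs!(s+m)) (X t)"
    proof
      fix s assume s: "s \<in> Rt"
      hence sm: "s < m" by (simp add: Rt_def)
      have "vs!s \<in> V" "vs!(s+m) \<in> V" using inV len sm by auto
      moreover have "x0 \<le> X t" using t by (simp add: Rt_def)
      moreover have "X t \<le> X s" using tmin s .
      ultimately show "cov B (vs!s) (X t) \<and> cov B (vs!(s+m)) (X t)"
        using X[OF sm] x0ge by force
    qed
    have "card Rt - 1 \<le> k" using count[of Rt t] cv t X[OF tm] by (force simp: Rt_def)
    thus False using cR by simp
  next
    assume cL: "k+2 \<le> card Lt"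
    have finL1: "finite Lt" by (simp add: Lt_def)
    have finL: "finite Lt" "Lt \<noteq> {}" using cL finL1 by (auto simp del: One_nat_def)
    have "Max (X ` Lt) \<in> X ` Lt" using Max_in[of "X ` Lt"] finL by blast
    then obtain t where t: "t \<in> Lt" "X t = Max (X ` Lt)" by (metis imageE)
    have tmax: "\<And>s. s \<in> Lt \<Longrightarrow> X s \<le> X t" using t finL by simp
    have tm: "t < m" using t by (simp add: Lt_def)
    have cv: "\<forall>s\<in>Lt. cov B (vs!s) (X t) \<and> cov B (vs!(s+m)) (X t)"
    proof
      fix s assume s: "s \<in> Lt"
      hence sm: "s < m" by (simp add: Lt_def)
      have "vs!s \<in> V" "vs!(s+m) \<in> V" using inV len sm by auto
      moreover have "X t < x0" using t by (simp add: Lt_def)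
      moreover have "X s \<le> X t" using tmax s .
      ultimately show "cov B (vs!s) (X t) \<and> cov B (vs!(s+m)) (X t)"
        using X[OF sm] x0le by force
    qed
    have "card Lt - 1 \<le> k" using count[of Lt t] cv t X[OF tm] by (force simp: Lt_def)
    thus False using cL by simp
  qed
qed


lemma sees_overlap: "k_sees k V B u v \<Longrightarrow> \<exists>x. cov B u x \<and> cov B v x"
  unfolding k_sees_def by auto

lemma c4_not:
  fixes V :: "nat set"
  assumes rep: "bar_rep V B"
    and vis: "\<forall>u v. E u v \<longleftrightarrow> (u \<in> V \<and> v \<in> V \<and> u \<noteq> v \<and> k_sees k V B u v)"
    and e: "E a b" "E b c" "E c d" "E d a" "\<not> E a c" "\<not> E b d" "a \<noteq> c" "b \<noteq> d"
    and nc1: "\<And>T. T \<subseteq> V - {a,c} \<Longrightarrow> (\<forall>s\<in>T. \<forall>t\<in>T. s \<noteq> t \<longrightarrow> E s t) \<Longrightarrow> card T \<le> k"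
    and nc2: "\<And>T. T \<subseteq> V - {b,d} \<Longrightarrow> (\<forall>s\<in>T. \<forall>t\<in>T. s \<noteq> t \<longrightarrow> E s t) \<Longrightarrow> card T \<le> k"
  shows False
proof -
  have V: "a \<in> V" "b \<in> V" "c \<in> V" "d \<in> V" using e vis by auto
  have disj: "\<not> (cov B p x \<and> cov B q x)"
    if pq: "p \<in> V" "q \<in> V" "p \<noteq> q" "\<not> E p q"
      and nc: "\<And>T. T \<subseteq> V - {p,q} \<Longrightarrow> (\<forall>s\<in>T. \<forall>t\<in>T. s \<noteq> t \<longrightarrow> E s t) \<Longrightarrow> card T \<le> k"
    for p q x
  proof
    assume cv: "cov B p x \<and> cov B q x"
    have "\<not> k_sees k V B p q" using pq vis by auto
    then obtain T where T: "T \<subseteq> V - {p,q}" "card T = k+1" "\<forall>s\<in>T. \<forall>t\<in>T. s \<noteq> t \<longrightarrow> k_sees k V B s t"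
      using block_clique[OF rep pq(1,2,3), of k x] cv by blast
    have "\<forall>s\<in>T. \<forall>t\<in>T. s \<noteq> t \<longrightarrow> E s t"
    proof (intro ballI impI)
      fix s t assume "s \<in> T" "t \<in> T" "s \<noteq> t"
      thus "E s t" using T vis by blast
    qed
    hence "card T \<le> k" using nc[OF T(1)] by blast
    thus False using T(2) by simp
  qed
  have dac: "\<And>x. \<not> (cov B a x \<and> cov B c x)" using disj[OF V(1,3) e(7) e(5) nc1] .
  have dbd: "\<And>x. \<not> (cov B b x \<and> cov B d x)" using disj[OF V(2,4) e(8) e(6) nc2] .
  have ks: "\<And>u v. E u v \<Longrightarrow> k_sees k V B u v" using vis by blast
  obtain x1 where x1: "cov B a x1" "cov B b x1" using sees_overlap[OF ks[OF e(1)]] by blast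
  obtain x2 where x2: "cov B b x2" "cov B c x2" using sees_overlap[OF ks[OF e(2)]] by blast
  obtain x3 where x3: "cov B c x3" "cov B d x3" using sees_overlap[OF ks[OF e(3)]] by blast
  obtain x4 where x4: "cov B d x4" "cov B a x4" using sees_overlap[OF ks[OF e(4)]] by blast
  let ?la = "bar_l (B a)" and ?ra = "bar_r (B a)" and ?lc = "bar_l (B c)" and ?rc = "bar_r (B c)"
  have "\<not> (?la \<le> max ?la ?lc \<and> max ?la ?lc \<le> ?ra \<and> ?lc \<le> max ?la ?lc \<and> max ?la ?lc \<le> ?rc)"
    using dac by blast
  hence "?ra < ?lc \<or> ?rc < ?la" using x1 x2 x3 x4 by (auto simp: max_def split: if_splits)
  thus False
  proof
    assume h: "?ra < ?lc"
    have "cov B b ?ra" "cov B d ?ra" using h x1 x2 x3 x4 by auto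
    thus False using dbd by blast
  next
    assume h: "?rc < ?la"
    have "cov B b ?rc" "cov B d ?rc" using h x1 x2 x3 x4 by auto
    thus False using dbd by blast
  qed
qed


definition cset :: "'a set \<Rightarrow> ('a \<Rightarrow> bar) \<Rightarrow> 'a \<Rightarrow> 'a \<Rightarrow> real \<Rightarrow> 'a set" where
  "cset V B u v x = {w \<in> V - {u, v}. cov B w x \<and>
      min (bar_y (B u)) (bar_y (B v)) \<le> bar_y (B w) \<and> bar_y (B w) \<le> max (bar_y (B u)) (bar_y (B v))}"

lemma sees_intro:
  assumes "cov B u x" "cov B v x" "cset V B u v x \<subseteq> A" "finite A" "card A \<le> k"
  shows "k_sees k V B u v"
proof -
  have "card (cset V B u v x) \<le> k" using card_mono[OF assms(4,3)] assms(5) by simp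
  hence "bars_crossed V B u v x \<le> k" by (simp add: bars_crossed_def cset_def)
  thus ?thesis using assms(1,2) unfolding k_sees_def by blast
qed

lemma notsees_intro:
  assumes "finite V" "\<And>x. cov B u x \<Longrightarrow> cov B v x \<Longrightarrow> A \<subseteq> cset V B u v x" "k < card A"
  shows "\<not> k_sees k V B u v"
proof
  assume "k_sees k V B u v"
  then obtain x where x: "cov B u x" "cov B v x" "bars_crossed V B u v x \<le> k" unfolding k_sees_def by blast
  have "finite (cset V B u v x)" using assms(1) by (simp add: cset_def)
  hence "card A \<le> card (cset V B u v x)" using card_mono assms(2)[OF x(1,2)] by blast
  also have "\<dots> \<le> k" using x(3) by (simp add: bars_crossed_def cset_def)
  finally show False using assms(3) by simp
qed

definition Vg :: "nat \<Rightarrow> nat set" where "Vg i = {..i+3}"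
definition Bg :: "nat \<Rightarrow> nat \<Rightarrow> bar" where
  "Bg i v = (if v = 0 then (0,0,4) else if v = 1 then (1,0,2) else if v = 2 then (real i + 2, 1, 2)
     else if v = 3 then (real i + 3, 1, 4) else (real v - 2, 1, 2))"
definition Eg :: "nat \<Rightarrow> nat \<Rightarrow> nat \<Rightarrow> bool" where
  "Eg i u v = (u \<in> Vg i \<and> v \<in> Vg i \<and> u \<noteq> v \<and> k_sees i (Vg i) (Bg i) u v)"

lemma Bg_simps:
  "bar_y (Bg i 0) = 0" "bar_l (Bg i 0) = 0" "bar_r (Bg i 0) = 4"
  "bar_y (Bg i 1) = 1" "bar_l (Bg i 1) = 0" "bar_r (Bg i 1) = 2"
  "bar_y (Bg i (Suc 0)) = 1" "bar_l (Bg i (Suc 0)) = 0" "bar_r (Bg i (Suc 0)) = 2"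
  "bar_y (Bg i 2) = real i + 2" "bar_l (Bg i 2) = 1" "bar_r (Bg i 2) = 2"
  "bar_y (Bg i 3) = real i + 3" "bar_l (Bg i 3) = 1" "bar_r (Bg i 3) = 4"
  "v \<ge> 4 \<Longrightarrow> bar_y (Bg i v) = real v - 2"
  "v \<ge> 4 \<Longrightarrow> bar_l (Bg i v) = 1" "v \<ge> 4 \<Longrightarrow> bar_r (Bg i v) = 2"
  by (auto simp: Bg_def bar_y_def bar_l_def bar_r_def)

lemma Bg_cases: "(v::nat) = 0 \<or> v = 1 \<or> v = 2 \<or> v = 3 \<or> v \<ge> 4" by arith

lemma rep_g: "bar_rep (Vg i) (Bg i)"
proof -
  have lr: "\<forall>v. bar_l (Bg i v) < bar_r (Bg i v)"
  proof
    fix v show "bar_l (Bg i v) < bar_r (Bg i v)" using Bg_cases[of v] by (auto simp: Bg_simps)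
  qed
  have hy: "\<forall>u v. u \<in> Vg i \<longrightarrow> v \<in> Vg i \<longrightarrow> u \<noteq> v \<longrightarrow> bar_y (Bg i u) \<noteq> bar_y (Bg i v)"
  proof (intro allI impI)
    fix u v assume u: "u \<in> Vg i" and v: "v \<in> Vg i" and uv: "u \<noteq> v"
    show "bar_y (Bg i u) \<noteq> bar_y (Bg i v)"
      using Bg_cases[of u] Bg_cases[of v] u v uv by (auto simp: Bg_simps Vg_def)
  qed
  show ?thesis unfolding bar_rep_def using lr hy by (auto simp: Vg_def)
qed

lemma bkv_g: "bar_k_visibility_graph i (Vg i) (Eg i)"
  unfolding bar_k_visibility_graph_def using rep_g by (auto simp: Eg_def)

lemma cset_g_F: "cset (Vg i) (Bg i) u v x \<subseteq> {4..i+3} \<union> {u,v} \<union> (cset (Vg i) (Bg i) u v x \<inter> {0,1,2,3})"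
  by (auto simp: cset_def Vg_def)


lemma wcases: "w \<in> Vg i - {u,v} \<Longrightarrow> (w = 0 \<Longrightarrow> P) \<Longrightarrow> (w = 1 \<Longrightarrow> P) \<Longrightarrow> (w = 2 \<Longrightarrow> P) \<Longrightarrow> (w = 3 \<Longrightarrow> P)
  \<Longrightarrow> (4 \<le> w \<Longrightarrow> w \<le> i+3 \<Longrightarrow> P) \<Longrightarrow> P"
  using Bg_cases[of w] by (auto simp: Vg_def)

lemma sees_g01: "k_sees i (Vg i) (Bg i) 0 1"
proof (rule sees_intro[where x="1/2" and A="{}"])
  show "cset (Vg i) (Bg i) 0 1 (1/2) \<subseteq> {}"
  proof
    fix w assume w: "w \<in> cset (Vg i) (Bg i) 0 1 (1/2)"
    hence wv: "w \<in> Vg i - {0,1}" by (simp add: cset_def)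
    show "w \<in> {}" by (rule wcases[OF wv]) (use w in \<open>auto simp: cset_def Bg_simps\<close>)
  qed
qed (auto simp: Bg_simps)

lemma sees_g12: "k_sees i (Vg i) (Bg i) 1 2"
proof (rule sees_intro[where x="3/2" and A="{4..i+3}"])
  show "cset (Vg i) (Bg i) 1 2 (3/2) \<subseteq> {4..i+3}"
  proof
    fix w assume w: "w \<in> cset (Vg i) (Bg i) 1 2 (3/2)"
    hence wv: "w \<in> Vg i - {1,2}" by (simp add: cset_def)
    show "w \<in> {4..i+3}" by (rule wcases[OF wv]) (use w in \<open>auto simp: cset_def Bg_simps\<close>)
  qed
qed (auto simp: Bg_simps)

lemma sees_g23: "k_sees i (Vg i) (Bg i) 2 3"
proof (rule sees_intro[where x="3/2" and A="{}"])
  show "cset (Vg i) (Bg i) 2 3 (3/2) \<subseteq> {}"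
  proof
    fix w assume w: "w \<in> cset (Vg i) (Bg i) 2 3 (3/2)"
    hence wv: "w \<in> Vg i - {2,3}" by (simp add: cset_def)
    show "w \<in> {}" by (rule wcases[OF wv]) (use w in \<open>auto simp: cset_def Bg_simps\<close>)
  qed
qed (auto simp: Bg_simps)

lemma sees_g30: "k_sees i (Vg i) (Bg i) 3 0"
proof (rule sees_intro[where x="3" and A="{}"])
  show "cset (Vg i) (Bg i) 3 0 3 \<subseteq> {}"
  proof
    fix w assume w: "w \<in> cset (Vg i) (Bg i) 3 0 3"
    hence wv: "w \<in> Vg i - {3,0}" by (simp add: cset_def)
    show "w \<in> {}" by (rule wcases[OF wv]) (use w in \<open>auto simp: cset_def Bg_simps\<close>)
  qed
qed (auto simp: Bg_simps)

lemma nsees_g02: "\<not> k_sees i (Vg i) (Bg i) 0 2"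
proof (rule notsees_intro[where A="insert 1 {4..i+3}"])
  fix x assume x: "cov (Bg i) 0 x" "cov (Bg i) 2 x"
  show "insert 1 {4..i+3} \<subseteq> cset (Vg i) (Bg i) 0 2 x"
    using x by (auto simp: cset_def Bg_simps Vg_def)
qed (auto simp: Vg_def)

lemma nsees_g13: "\<not> k_sees i (Vg i) (Bg i) 1 3"
proof (rule notsees_intro[where A="insert 2 {4..i+3}"])
  fix x assume x: "cov (Bg i) 1 x" "cov (Bg i) 3 x"
  show "insert 2 {4..i+3} \<subseteq> cset (Vg i) (Bg i) 1 3 x"
    using x by (auto simp: cset_def Bg_simps Vg_def)
qed (auto simp: Vg_def)




lemma Vg03: "0 \<in> Vg i" "1 \<in> Vg i" "2 \<in> Vg i" "3 \<in> Vg i" by (auto simp: Vg_def)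

lemma Eg_facts:
  "Eg i 0 1" "Eg i 1 2" "Eg i 2 3" "Eg i 3 0" "\<not> Eg i 0 2" "\<not> Eg i 1 3"
proof -
  show "Eg i 0 1" unfolding Eg_def using Vg03 sees_g01 by simp
  show "Eg i 1 2" unfolding Eg_def using Vg03 sees_g12 by simp
  show "Eg i 2 3" unfolding Eg_def using Vg03 sees_g23 by simp
  show "Eg i 3 0" unfolding Eg_def using Vg03 sees_g30 by simp
  show "\<not> Eg i 0 2" unfolding Eg_def using nsees_g02 by simp
  show "\<not> Eg i 1 3" unfolding Eg_def using nsees_g13 by simp
qed


lemma nc_aux:
  assumes "T \<subseteq> Vg i - {p,q}" "\<not> (p' \<in> T \<and> q' \<in> T)" "Vg i - {p,q} = {p',q'} \<union> {4..i+3}"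
    "p' < 4" "q' < 4"
  shows "card T \<le> i + 1"
proof -
  have T: "T \<subseteq> {p',q'} \<union> {4..i+3}" using assms(1,3) by simp
  have fin: "finite (insert p' {4..i+3})" "finite (insert q' {4..i+3})" by auto
  have c: "card (insert p' {4..i+3}) = i+1" "card (insert q' {4..i+3}) = i+1"
    using assms(4,5) by auto
  show ?thesis
  proof (cases "p' \<in> T")
    case True
    hence "T \<subseteq> insert p' {4..i+3}" using T assms(2) by auto
    thus ?thesis using card_mono[OF fin(1)] c(1) by simp
  next
    case False
    hence "T \<subseteq> insert q' {4..i+3}" using T by auto
    thus ?thesis using card_mono[OF fin(2)] c(2) by simp
  qed
qed

lemma part_A:
  assumes ij: "i < j"
  shows "\<exists>(V :: nat set) E. bar_k_visibility_graph i V E \<and> \<not> bar_k_visibility_graph j V E"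
proof -
  have h1: "bar_k_visibility_graph i (Vg i) (Eg i)" by (rule bkv_g)
  have h2: "\<not> bar_k_visibility_graph j (Vg i) (Eg i)"
  proof
    assume "bar_k_visibility_graph j (Vg i) (Eg i)"
    then obtain B where rep: "bar_rep (Vg i) B"
      and vis: "\<forall>u v. Eg i u v \<longleftrightarrow> (u \<in> Vg i \<and> v \<in> Vg i \<and> u \<noteq> v \<and> k_sees j (Vg i) B u v)"
      unfolding bar_k_visibility_graph_def by blast
    have nc1: "card T \<le> j" if T: "T \<subseteq> Vg i - {0,2}" and cl: "\<forall>s\<in>T. \<forall>t\<in>T. s \<noteq> t \<longrightarrow> Eg i s t" for T
    proof -
      have "\<not> (1 \<in> T \<and> 3 \<in> T)" using cl Eg_facts(6) by force
      moreover have "Vg i - {0,2} = {1,3} \<union> {4..i+3}" unfolding Vg_def by (rule set_eqI) (simp, arith)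
      ultimately have "card T \<le> i+1" using nc_aux[OF T] by simp
      thus "card T \<le> j" using ij by simp
    qed
    have nc2: "card T \<le> j" if T: "T \<subseteq> Vg i - {1,3}" and cl: "\<forall>s\<in>T. \<forall>t\<in>T. s \<noteq> t \<longrightarrow> Eg i s t" for T
    proof -
      have "\<not> (0 \<in> T \<and> 2 \<in> T)" using cl Eg_facts(5) by force
      moreover have "Vg i - {1,3} = {0,2} \<union> {4..i+3}" unfolding Vg_def by (rule set_eqI) (simp, arith)
      ultimately have "card T \<le> i+1" using nc_aux[OF T] by simp
      thus "card T \<le> j" using ij by simp
    qed
    have n02: "(0::nat) \<noteq> 2" and n13: "(1::nat) \<noteq> 3" by simp_all
    from c4_not[OF rep vis Eg_facts(1-6) n02 n13 nc1 nc2] show False .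
  qed
  show ?thesis using h1 h2 by blast
qed



definition cR :: "nat \<Rightarrow> real" where
  "cR g = (if g = 0 then 3 else if g = 1 then 2 else if g = 2 then 1 else 4)"
definition cL :: "nat \<Rightarrow> real" where
  "cL g = (if g = 0 then 4 else if g = 1 then 1 else if g = 2 then 3 else 2)"
definition Y' :: "nat \<Rightarrow> nat \<Rightarrow> nat \<Rightarrow> real" where
  "Y' k g t = real g * (real k + 1) + real t"
definition R' :: "nat \<Rightarrow> nat \<Rightarrow> nat \<Rightarrow> real" where
  "R' k g t = (real k + 1) * cR g + (if g \<le> 1 then real k - real t else real t)"
definition L' :: "nat \<Rightarrow> nat \<Rightarrow> nat \<Rightarrow> real" where
  "L' k g t = - ((real k + 1) * cL g + real t)"
definition VK :: "nat \<Rightarrow> nat set" where "VK k = {..<4*(k+1)}"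
definition BK :: "nat \<Rightarrow> nat \<Rightarrow> bar" where
  "BK k v = (Y' k (v mod 4) (v div 4), L' k (v mod 4) (v div 4), R' k (v mod 4) (v div 4))"

lemma BK_simps:
  "bar_y (BK k (4*t+g)) = Y' k g t" "bar_l (BK k (4*t+g)) = L' k g t" "bar_r (BK k (4*t+g)) = R' k g t"
  if "g < 4" for g t
  using that by (auto simp: BK_def bar_y_def bar_l_def bar_r_def)

lemma VK_dec: "v \<in> VK k \<longleftrightarrow> (\<exists>t g. v = 4*t+g \<and> g < 4 \<and> t \<le> k)"
proof
  assume "v \<in> VK k"
  hence "v = 4*(v div 4) + v mod 4" "v mod 4 < 4" "v div 4 \<le> k" by (auto simp: VK_def)
  thus "\<exists>t g. v = 4*t+g \<and> g < 4 \<and> t \<le> k" by blast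
next
  assume "\<exists>t g. v = 4*t+g \<and> g < 4 \<and> t \<le> k"
  thus "v \<in> VK k" by (auto simp: VK_def)
qed

lemma g4: "(g::nat) < 4 \<Longrightarrow> g = 0 \<or> g = 1 \<or> g = 2 \<or> g = 3" by arith

lemma dec_eq: "g < 4 \<Longrightarrow> g' < 4 \<Longrightarrow> 4*t+g = 4*t'+(g'::nat) \<longleftrightarrow> t = t' \<and> g = g'" by arith

lemma LR_pos: "g < 4 \<Longrightarrow> t \<le> k \<Longrightarrow> L' k g t < 0 \<and> 0 < R' k g t"
  using g4[of g] by (auto simp: L'_def R'_def cL_def cR_def)

lemma rep_K: "bar_rep (VK k) (BK k)"
proof -
  have lr: "bar_l (BK k v) < bar_r (BK k v)" if "v \<in> VK k" for v
    using that LR_pos by (force simp: VK_dec BK_simps)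
  have hy: "bar_y (BK k u) \<noteq> bar_y (BK k v)" if uvV: "u \<in> VK k" "v \<in> VK k" "u \<noteq> v" for u v
  proof -
    obtain tu gu where u: "u = 4*tu+gu" "gu < 4" "tu \<le> k" using uvV(1) VK_dec by blast
    obtain tv gv where v: "v = 4*tv+gv" "gv < 4" "tv \<le> k" using uvV(2) VK_dec by blast
    have "Y' k gu tu \<noteq> Y' k gv tv"
      using g4[OF u(2)] g4[OF v(2)] u v uvV(3) by (auto simp: Y'_def)
    thus ?thesis using u v by (simp add: BK_simps)
  qed
  show ?thesis unfolding bar_rep_def using lr hy by (auto simp: VK_def)
qed

lemma K_case:
  fixes k tu tv gu gv gsel lo hi :: nat and x :: real
  assumes u: "u = 4*tu + gu" "gu < 4" "tu \<le> k" and v: "v = 4*tv + gv" "gv < 4" "tv \<le> k"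
    and lt: "Y' k gu tu < Y' k gv tv"
    and covu: "L' k gu tu \<le> x" "x \<le> R' k gu tu" and covv: "L' k gv tv \<le> x" "x \<le> R' k gv tv"
    and key: "\<And>tw gw. gw < 4 \<Longrightarrow> tw \<le> k \<Longrightarrow> (gw = gu \<longrightarrow> tw \<noteq> tu) \<Longrightarrow> (gw = gv \<longrightarrow> tw \<noteq> tv)
       \<Longrightarrow> L' k gw tw \<le> x \<Longrightarrow> x \<le> R' k gw tw \<Longrightarrow> Y' k gu tu \<le> Y' k gw tw \<Longrightarrow> Y' k gw tw \<le> Y' k gv tv
       \<Longrightarrow> gw = gsel \<and> lo \<le> tw \<and> tw < hi"
    and hl: "hi \<le> lo + k"
  shows "k_sees k (VK k) (BK k) u v"
proof (rule sees_intro[where x=x and A="(\<lambda>s. 4*s+gsel) ` {lo..<hi}"])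
  show "cov (BK k) u x" "cov (BK k) v x" using u v covu covv by (simp_all add: BK_simps)
  show "cset (VK k) (BK k) u v x \<subseteq> (\<lambda>s. 4*s+gsel) ` {lo..<hi}"
  proof
    fix w assume w: "w \<in> cset (VK k) (BK k) u v x"
    then obtain tw gw where wd: "w = 4*tw+gw" "gw < 4" "tw \<le> k" unfolding cset_def using VK_dec by blast
    have wuv: "w \<noteq> u" "w \<noteq> v" using w by (auto simp: cset_def)
    have "gw = gsel \<and> lo \<le> tw \<and> tw < hi"
    proof (rule key[OF wd(2,3)])
      show "gw = gu \<longrightarrow> tw \<noteq> tu" "gw = gv \<longrightarrow> tw \<noteq> tv" using wuv wd u v by auto
      show "L' k gw tw \<le> x" "x \<le> R' k gw tw" using w wd by (auto simp: cset_def BK_simps)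
      show "Y' k gu tu \<le> Y' k gw tw" "Y' k gw tw \<le> Y' k gv tv" using w wd u v lt by (auto simp: cset_def BK_simps)
    qed
    thus "w \<in> (\<lambda>s. 4*s+gsel) ` {lo..<hi}" using wd by auto
  qed
  show "finite ((\<lambda>s. 4*s+gsel) ` {lo..<hi})" by simp
  have "card ((\<lambda>s. 4*s+gsel) ` {lo..<hi}) \<le> card {lo..<hi}" by (rule card_image_le) simp
  thus "card ((\<lambda>s. 4*s+gsel) ` {lo..<hi}) \<le> k" using hl by simp
qed

lemma K_case4:
  fixes k tu tv gu gv gsel lo hi :: nat and x :: real
  assumes u: "gu < 4" "tu \<le> k" and v: "gv < 4" "tv \<le> k"
    and lt: "Y' k gu tu < Y' k gv tv"
    and covu: "L' k gu tu \<le> x" "x \<le> R' k gu tu" and covv: "L' k gv tv \<le> x" "x \<le> R' k gv tv"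
    and key: "\<And>tw gw. gw \<in> {0,1,2,3} \<Longrightarrow> tw \<le> k \<Longrightarrow> (gw = gu \<longrightarrow> tw \<noteq> tu) \<Longrightarrow> (gw = gv \<longrightarrow> tw \<noteq> tv)
       \<Longrightarrow> L' k gw tw \<le> x \<Longrightarrow> x \<le> R' k gw tw \<Longrightarrow> Y' k gu tu \<le> Y' k gw tw \<Longrightarrow> Y' k gw tw \<le> Y' k gv tv
       \<Longrightarrow> gw = gsel \<and> lo \<le> tw \<and> tw < hi"
    and hl: "hi \<le> lo + k"
  shows "k_sees k (VK k) (BK k) (4*tu+gu) (4*tv+gv)"
  by (rule K_case[OF refl u refl v lt covu covv key hl]) (use g4 in auto)

lemma Kc_00: assumes "tu \<le> k" "tv \<le> k" "Y' k 0 tu < Y' k 0 tv"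
  shows "k_sees k (VK k) (BK k) (4*tu+0) (4*tv+0)"
  apply (rule K_case4[where x="0" and gsel=0 and lo="tu+1" and hi="tv"])
  using assms apply (auto simp: Y'_def L'_def R'_def cL_def cR_def)
  done

lemma Kc_11: assumes "tu \<le> k" "tv \<le> k" "Y' k 1 tu < Y' k 1 tv"
  shows "k_sees k (VK k) (BK k) (4*tu+1) (4*tv+1)"
  apply (rule K_case4[where x="0" and gsel=1 and lo="tu+1" and hi="tv"])
  using assms apply (auto simp: Y'_def L'_def R'_def cL_def cR_def)
  done

lemma Kc_22: assumes "tu \<le> k" "tv \<le> k" "Y' k 2 tu < Y' k 2 tv"
  shows "k_sees k (VK k) (BK k) (4*tu+2) (4*tv+2)"
  apply (rule K_case4[where x="0" and gsel=2 and lo="tu+1" and hi="tv"])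
  using assms apply (auto simp: Y'_def L'_def R'_def cL_def cR_def)
  done

lemma Kc_33: assumes "tu \<le> k" "tv \<le> k" "Y' k 3 tu < Y' k 3 tv"
  shows "k_sees k (VK k) (BK k) (4*tu+3) (4*tv+3)"
  apply (rule K_case4[where x="0" and gsel=3 and lo="tu+1" and hi="tv"])
  using assms apply (auto simp: Y'_def L'_def R'_def cL_def cR_def)
  done

lemma Kc_01: assumes "tu \<le> k" "tv \<le> k" "Y' k 0 tu < Y' k 1 tv"
  shows "k_sees k (VK k) (BK k) (4*tu+0) (4*tv+1)"
  apply (rule K_case4[where x="L' k 1 tv" and gsel=0 and lo="tu+1" and hi="k+1"])
  using assms apply (auto simp: Y'_def L'_def R'_def cL_def cR_def)
  done

lemma Kc_02: assumes "tu \<le> k" "tv \<le> k" "Y' k 0 tu < Y' k 2 tv"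
  shows "k_sees k (VK k) (BK k) (4*tu+0) (4*tv+2)"
  apply (rule K_case4[where x="L' k 2 tv" and gsel=0 and lo="tu+1" and hi="k+1"])
  using assms apply (auto simp: Y'_def L'_def R'_def cL_def cR_def)
  done

lemma Kc_03: assumes "tu \<le> k" "tv \<le> k" "Y' k 0 tu < Y' k 3 tv"
  shows "k_sees k (VK k) (BK k) (4*tu+0) (4*tv+3)"
  apply (rule K_case4[where x="R' k 0 tu" and gsel=3 and lo="0" and hi="tv"])
  using assms apply (auto simp: Y'_def L'_def R'_def cL_def cR_def)
  done

lemma Kc_12: assumes "tu \<le> k" "tv \<le> k" "Y' k 1 tu < Y' k 2 tv"
  shows "k_sees k (VK k) (BK k) (4*tu+1) (4*tv+2)"
  apply (rule K_case4[where x="R' k 2 tv" and gsel=1 and lo="tu+1" and hi="k+1"])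
  using assms apply (auto simp: Y'_def L'_def R'_def cL_def cR_def)
  done

lemma Kc_13: assumes "tu \<le> k" "tv \<le> k" "Y' k 1 tu < Y' k 3 tv"
  shows "k_sees k (VK k) (BK k) (4*tu+1) (4*tv+3)"
  apply (rule K_case4[where x="R' k 1 tu" and gsel=3 and lo="0" and hi="tv"])
  using assms apply (auto simp: Y'_def L'_def R'_def cL_def cR_def)
  done

lemma Kc_23: assumes "tu \<le> k" "tv \<le> k" "Y' k 2 tu < Y' k 3 tv"
  shows "k_sees k (VK k) (BK k) (4*tu+2) (4*tv+3)"
  apply (rule K_case4[where x="L' k 3 tv" and gsel=2 and lo="tu+1" and hi="k+1"])
  using assms apply (auto simp: Y'_def L'_def R'_def cL_def cR_def)
  done

lemma K_sees_lt:
  assumes tu: "tu \<le> k" and tv: "tv \<le> k" and gu: "gu < 4" and gv: "gv < 4"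
    and lt: "Y' k gu tu < Y' k gv tv"
  shows "k_sees k (VK k) (BK k) (4*tu+gu) (4*tv+gv)"
proof -
  have h00: "gu = 0 \<Longrightarrow> gv = 0 \<Longrightarrow> ?thesis" using Kc_00[OF tu tv] lt by simp
  have h01: "gu = 0 \<Longrightarrow> gv = 1 \<Longrightarrow> ?thesis" using Kc_01[OF tu tv] lt by simp
  have h02: "gu = 0 \<Longrightarrow> gv = 2 \<Longrightarrow> ?thesis" using Kc_02[OF tu tv] lt by simp
  have h03: "gu = 0 \<Longrightarrow> gv = 3 \<Longrightarrow> ?thesis" using Kc_03[OF tu tv] lt by simp
  have h10: "gu = 1 \<Longrightarrow> gv = 0 \<Longrightarrow> ?thesis" using lt tu tv by (simp add: Y'_def)
  have h11: "gu = 1 \<Longrightarrow> gv = 1 \<Longrightarrow> ?thesis" using Kc_11[OF tu tv] lt by simp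
  have h12: "gu = 1 \<Longrightarrow> gv = 2 \<Longrightarrow> ?thesis" using Kc_12[OF tu tv] lt by simp
  have h13: "gu = 1 \<Longrightarrow> gv = 3 \<Longrightarrow> ?thesis" using Kc_13[OF tu tv] lt by simp
  have h20: "gu = 2 \<Longrightarrow> gv = 0 \<Longrightarrow> ?thesis" using lt tu tv by (simp add: Y'_def)
  have h21: "gu = 2 \<Longrightarrow> gv = 1 \<Longrightarrow> ?thesis" using lt tu tv by (simp add: Y'_def)
  have h22: "gu = 2 \<Longrightarrow> gv = 2 \<Longrightarrow> ?thesis" using Kc_22[OF tu tv] lt by simp
  have h23: "gu = 2 \<Longrightarrow> gv = 3 \<Longrightarrow> ?thesis" using Kc_23[OF tu tv] lt by simp
  have h30: "gu = 3 \<Longrightarrow> gv = 0 \<Longrightarrow> ?thesis" using lt tu tv by (simp add: Y'_def)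
  have h31: "gu = 3 \<Longrightarrow> gv = 1 \<Longrightarrow> ?thesis" using lt tu tv by (simp add: Y'_def)
  have h32: "gu = 3 \<Longrightarrow> gv = 2 \<Longrightarrow> ?thesis" using lt tu tv by (simp add: Y'_def)
  have h33: "gu = 3 \<Longrightarrow> gv = 3 \<Longrightarrow> ?thesis" using Kc_33[OF tu tv] lt by simp
  show ?thesis
  proof (rule disjE[OF g4[OF gu]])
    assume a: "gu = 0"
    show ?thesis
    proof (rule disjE[OF g4[OF gv]])
      assume "gv = 0" thus ?thesis by (rule h00[OF a])
    next
      assume "gv = 1 \<or> gv = 2 \<or> gv = 3"
      thus ?thesis
      proof (elim disjE)
        assume "gv = 1" thus ?thesis by (rule h01[OF a])
      next
        assume "gv = 2" thus ?thesis by (rule h02[OF a])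
      next
        assume "gv = 3" thus ?thesis by (rule h03[OF a])
      qed
    qed
  next
    assume "gu = 1 \<or> gu = 2 \<or> gu = 3"
    thus ?thesis
    proof (elim disjE)
      assume a: "gu = 1"
      show ?thesis
      proof (rule disjE[OF g4[OF gv]])
        assume "gv = 0" thus ?thesis by (rule h10[OF a])
      next
        assume "gv = 1 \<or> gv = 2 \<or> gv = 3"
        thus ?thesis
        proof (elim disjE)
          assume "gv = 1" thus ?thesis by (rule h11[OF a])
        next
          assume "gv = 2" thus ?thesis by (rule h12[OF a])
        next
          assume "gv = 3" thus ?thesis by (rule h13[OF a])
        qed
      qed
    next
      assume a: "gu = 2"
      show ?thesis
      proof (rule disjE[OF g4[OF gv]])
        assume "gv = 0" thus ?thesis by (rule h20[OF a])
      next
        assume "gv = 1 \<or> gv = 2 \<or> gv = 3"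
        thus ?thesis
        proof (elim disjE)
          assume "gv = 1" thus ?thesis by (rule h21[OF a])
        next
          assume "gv = 2" thus ?thesis by (rule h22[OF a])
        next
          assume "gv = 3" thus ?thesis by (rule h23[OF a])
        qed
      qed
    next
      assume a: "gu = 3"
      show ?thesis
      proof (rule disjE[OF g4[OF gv]])
        assume "gv = 0" thus ?thesis by (rule h30[OF a])
      next
        assume "gv = 1 \<or> gv = 2 \<or> gv = 3"
        thus ?thesis
        proof (elim disjE)
          assume "gv = 1" thus ?thesis by (rule h31[OF a])
        next
          assume "gv = 2" thus ?thesis by (rule h32[OF a])
        next
          assume "gv = 3" thus ?thesis by (rule h33[OF a])
        qed
      qed
    qed
  qed
qed

lemma K_sees_all:
  assumes "u \<in> VK k" "v \<in> VK k" "u \<noteq> v"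
  shows "k_sees k (VK k) (BK k) u v"
proof -
  obtain tu gu where u: "u = 4*tu+gu" "gu < 4" "tu \<le> k" using assms(1) VK_dec by blast
  obtain tv gv where v: "v = 4*tv+gv" "gv < 4" "tv \<le> k" using assms(2) VK_dec by blast
  have "bar_y (BK k u) \<noteq> bar_y (BK k v)"
  proof -
    have "cov (BK k) u 0" "cov (BK k) v 0" using LR_pos[OF u(2,3)] LR_pos[OF v(2,3)] u v
      by (auto simp: BK_simps less_imp_le)
    thus ?thesis using rep_hd[OF rep_K assms] by blast
  qed
  hence ne: "Y' k gu tu \<noteq> Y' k gv tv" using u v by (simp add: BK_simps)
  show ?thesis
  proof (cases "Y' k gu tu < Y' k gv tv")
    case True thus ?thesis using K_sees_lt[OF u(3) v(3) u(2) v(2)] u v by simp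
  next
    case False
    hence "Y' k gv tv < Y' k gu tu" using ne by simp
    thus ?thesis using K_sees_lt[OF v(3) u(3) v(2) u(2)] u v k_sees_sym by metis
  qed
qed


lemma part_B:
  assumes ij: "i < j"
  shows "\<exists>(V :: nat set) E. bar_k_visibility_graph j V E \<and> \<not> bar_k_visibility_graph i V E"
proof -
  define E where "E = (\<lambda>u v. u \<in> VK j \<and> v \<in> VK j \<and> u \<noteq> v)"
  have h1: "bar_k_visibility_graph j (VK j) E"
    unfolding bar_k_visibility_graph_def E_def using rep_K K_sees_all by blast
  have h2: "\<not> bar_k_visibility_graph i (VK j) E"
  proof
    assume "bar_k_visibility_graph i (VK j) E"
    then obtain B where rep: "bar_rep (VK j) B"
      and vis: "\<forall>u v. E u v \<longleftrightarrow> (u \<in> VK j \<and> v \<in> VK j \<and> u \<noteq> v \<and> k_sees i (VK j) B u v)"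
      unfolding bar_k_visibility_graph_def by blast
    have all: "k_sees i (VK j) B u v" if "u \<in> VK j" "v \<in> VK j" "u \<noteq> v" for u v
    proof -
      have "E u v" using that by (simp add: E_def)
      thus ?thesis using vis by blast
    qed
    have "2*(2*i+3) \<le> card (VK j)" using ij by (simp add: VK_def)
    thus False using K_not[OF rep all] by blast
  qed
  show ?thesis using h1 h2 by blast
qed

theorem mainTheorem13:
  fixes i j :: nat
  assumes "i \<noteq> j"
  shows "(\<exists>(V :: nat set) E. bar_k_visibility_graph i V E \<and> \<not> bar_k_visibility_graph j V E) \<and>
         (\<exists>(V :: nat set) E. bar_k_visibility_graph j V E \<and> \<not> bar_k_visibility_graph i V E)"
proof (cases "i < j")
  case True
  thus ?thesis using part_A[OF True] part_B[OF True] by blast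
next
  case False
  hence ji: "j < i" using assms by simp
  thus ?thesis using part_A[OF ji] part_B[OF ji] by blast
qed

end
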